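(* For all real $y\ge x\ge0$, $$\lim_{n\to\infty}\frac{\log p([y\log n]+1,[x\log n])}{\log n}=\lim_{n\to\infty}\frac{\log p_1([y\log n],[x\log n])}{\log n}=\lim_{n\to\infty}\frac{\log p_{-1}([y\log n]+1,[x\log n]+1)}{\log n}=-g(x,y).$$
   Context: Let $0<q<p<1$ with $p+q=1$. Define, for integers: $p(L,K)=\binom{L-1}{K}(2p)^Kq^{L-1}p(1-2q)$ for $K\ge0$, $L\ge K+1$; $p_{-1}(L,K)=\binom{L}{K}(2p)^{K-1}q^{L-1}p^2(1-2q)$ for $K\ge1$, $L\ge K$; $p_1(L,K)=\binom{L}{K}(2p)^{K-1}q^{L}p(1-2q)$ for $K\ge1$, $L\ge K$, and $p_1(L,0)=q^L(1-2q)$ for $L\ge0$. Let $g(x,y)=x\log x-y\log y+(y-x)\log(y-x)-x\log(2p)-y\log q$ with the convention $0\log0=0$. $[\cdot]$ denotes the integer part. *)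

theory Defs
  imports Complex_Main
begin

text \<open>The probabilities p(L,K), p_{-1}(L,K), p_1(L,K); parameters p and q (with p + q = 1).
  Arguments outside the stated domains are never used in the statement.\<close>

definition pLK :: "real \<Rightarrow> real \<Rightarrow> nat \<Rightarrow> nat \<Rightarrow> real" where
  "pLK p q L K = real ((L - 1) choose K) * (2*p)^K * q^(L - 1) * p * (1 - 2*q)"

definition pm1LK :: "real \<Rightarrow> real \<Rightarrow> nat \<Rightarrow> nat \<Rightarrow> real" where
  "pm1LK p q L K = real (L choose K) * (2*p)^(K - 1) * q^(L - 1) * p^2 * (1 - 2*q)"

definition pp1LK :: "real \<Rightarrow> real \<Rightarrow> nat \<Rightarrow> nat \<Rightarrow> real" where
  "pp1LK p q L K = (if K = 0 then q^L * (1 - 2*q)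
                    else real (L choose K) * (2*p)^(K - 1) * q^L * p * (1 - 2*q))"

definition xlogx :: "real \<Rightarrow> real" where
  "xlogx t = (if t = 0 then 0 else t * ln t)"

definition gfun :: "real \<Rightarrow> real \<Rightarrow> real \<Rightarrow> real \<Rightarrow> real" where
  "gfun p q x y = xlogx x - xlogx y + xlogx (y - x) - x * ln (2*p) - y * ln q"

end

theory Submission imports Defs "HOL-Real_Asymp.Real_Asymp" begin

lemma lnfact_lower: "real m * ln (real m) - real m \<le> ln (fact m)"
proof (induction m)
  case 0 then show ?case by simp
next
  case (Suc m)
  have f: "ln (fact (Suc m) :: real) = ln (real m + 1) + ln (fact m)"
    by (simp add: ln_mult add.commute)
  have key: "real m * (ln (real m + 1) - ln (real m)) \<le> 1"
  proof (cases "m = 0")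
    case False
    then have mp: "real m > 0" by simp
    have "ln ((real m + 1) / real m) \<le> (real m + 1)/real m - 1"
      by (rule ln_le_minus_one) (use mp in simp)
    also have "\<dots> = 1 / real m" using mp by (simp add: field_simps)
    finally have "ln (real m + 1) - ln (real m) \<le> 1 / real m"
      using mp by (simp add: ln_div)
    then show ?thesis using mp by (simp add: field_simps)
  qed simp
  show ?case using Suc.IH key f by (simp add: algebra_simps)
qed

lemma lnfact_upper: "ln (fact m) \<le> real m * ln (real m) - real m + ln (real m) + 1"
proof (induction m)
  case 0 then show ?case by simp
next
  case (Suc m)
  have f: "ln (fact (Suc m) :: real) = ln (real m + 1) + ln (fact m)"
    by (simp add: ln_mult add.commute)
  show ?case
  proof (cases "m = 0")
    case True then show ?thesis by simp
  next
    case False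
    then have mp: "real m > 0" by simp
    have "ln (real m / (real m + 1)) \<le> real m / (real m + 1) - 1"
      by (rule ln_le_minus_one) (use mp in simp)
    also have "\<dots> = - 1 / (real m + 1)" using mp by (simp add: field_simps)
    finally have "ln (real m) - ln (real m + 1) \<le> - 1 / (real m + 1)"
      using mp by (simp add: ln_div)
    then have key: "1 \<le> (real m + 1) * (ln (real m + 1) - ln (real m))"
      using mp by (simp add: field_simps)
    show ?thesis using Suc.IH key f by (simp add: algebra_simps)
  qed
qed

lemma ln_nat_le: "real a \<le> real b + 1 \<Longrightarrow> ln (real a) \<le> ln (real b + 1)"
  by (cases "a = 0") auto

lemma ln_choose_bound:
  assumes "K \<le> L"
  shows "\<bar>ln (real (L choose K)) - (real L * ln (real L) - real K * ln (real K)
           - real (L - K) * ln (real (L - K)))\<bar> \<le> 2 * ln (real L + 1) + 2"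
proof -
  have c: "real (L choose K) = fact L / (fact K * fact (L - K))"
    using binomial_fact[OF assms] by simp
  have "ln (real (L choose K)) = ln (fact L) - ln (fact K) - ln (fact (L - K))"
    unfolding c by (simp add: ln_div ln_mult)
  moreover have "real (L - K) = real L - real K" using assms by simp
  moreover have "ln (real K) \<le> ln (real L + 1)" by (rule ln_nat_le) (use assms in simp)
  moreover have "ln (real (L-K)) \<le> ln (real L + 1)" by (rule ln_nat_le) simp
  moreover have "ln (real L) \<le> ln (real L + 1)" by (rule ln_nat_le) simp
  moreover note lnfact_lower[of L] lnfact_lower[of K] lnfact_lower[of "L-K"]
     lnfact_upper[of L] lnfact_upper[of K] lnfact_upper[of "L-K"]
  ultimately show ?thesis by (simp add: abs_le_iff)
qed

lemma xlogx_cont: "continuous_on {0..} xlogx"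
proof -
  have e: "xlogx = (\<lambda>t. t * ln t)" by (auto simp: xlogx_def fun_eq_iff)
  have lim0: "((\<lambda>t::real. t * ln t) \<longlongrightarrow> 0) (at_right 0)" by real_asymp
  show ?thesis unfolding e continuous_on_def
  proof (intro ballI)
    fix a :: real assume a: "a \<in> {0..}"
    show "((\<lambda>t. t * ln t) \<longlongrightarrow> a * ln a) (at a within {0..})"
    proof (cases "a = 0")
      case True
      have "at (0::real) within {0..} = at_right 0"
        by (rule at_within_Ici_at_right)
      then show ?thesis using True lim0 by simp
    next
      case False
      then have "a > 0" using a by simp
      then have "isCont (\<lambda>t. t * ln t) a" by (intro continuous_intros) auto
      then show ?thesis by (metis isCont_def tendsto_within_subset subset_UNIV)
    qed
  qed
qed

lemma xlogx_scale:
  assumes "N > 0" shows "N * xlogx (real a / N) = real a * ln (real a) - real a * ln N"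
proof (cases "a = 0")
  case False
  then have "real a > 0" by simp
  then show ?thesis using assms by (simp add: xlogx_def ln_div algebra_simps)
qed (simp add: xlogx_def)

lemma main_choose:
  fixes L K :: "nat \<Rightarrow> nat" and N :: "nat \<Rightarrow> real"
  assumes N: "filterlim N at_top sequentially"
    and KL: "\<And>n. K n \<le> L n"
    and Ly: "(\<lambda>n. real (L n) / N n) \<longlonglongrightarrow> y"
    and Kx: "(\<lambda>n. real (K n) / N n) \<longlonglongrightarrow> x"
    and lnL: "(\<lambda>n. ln (real (L n) + 1) / N n) \<longlonglongrightarrow> 0"
  shows "(\<lambda>n. ln (real (L n choose K n)) / N n) \<longlonglongrightarrow> xlogx y - xlogx x - xlogx (y - x)"
proof -
  have evN: "eventually (\<lambda>n. N n > 0) sequentially"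
    using N by (simp add: filterlim_at_top_dense)
  define E where "E n = ln (real (L n choose K n)) - (real (L n) * ln (real (L n)) - real (K n) * ln (real (K n))
           - real (L n - K n) * ln (real (L n - K n)))" for n
  have LK: "(\<lambda>n. real (L n - K n) / N n) \<longlonglongrightarrow> y - x"
  proof -
    have "(\<lambda>n. real (L n) / N n - real (K n) / N n) \<longlonglongrightarrow> y - x"
      by (intro tendsto_diff Ly Kx)
    moreover have "real (L n - K n) / N n = real (L n) / N n - real (K n) / N n" for n
      using KL[of n] by (simp add: of_nat_diff diff_divide_distrib)
    ultimately show ?thesis by simp
  qed
  have nonneg: "\<And>n. N n > 0 \<Longrightarrow> real (a n) / N n \<in> {0..}" for a :: "nat \<Rightarrow> nat" by simp
  have y0: "y \<ge> 0"
    by (rule tendsto_lowerbound[OF Ly]) (use evN in \<open>auto elim: eventually_mono\<close>)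
  have x0: "x \<ge> 0"
    by (rule tendsto_lowerbound[OF Kx]) (use evN in \<open>auto elim: eventually_mono\<close>)
  have yx0: "y - x \<ge> 0"
    by (rule tendsto_lowerbound[OF LK]) (use evN in \<open>auto elim: eventually_mono\<close>)
  have cL: "(\<lambda>n. xlogx (real (L n) / N n)) \<longlonglongrightarrow> xlogx y"
    by (rule continuous_on_tendsto_compose[OF xlogx_cont Ly]) (use y0 evN in \<open>auto elim: eventually_mono\<close>)
  have cK: "(\<lambda>n. xlogx (real (K n) / N n)) \<longlonglongrightarrow> xlogx x"
    by (rule continuous_on_tendsto_compose[OF xlogx_cont Kx]) (use x0 evN in \<open>auto elim: eventually_mono\<close>)
  have cLK: "(\<lambda>n. xlogx (real (L n - K n) / N n)) \<longlonglongrightarrow> xlogx (y - x)"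
    by (rule continuous_on_tendsto_compose[OF xlogx_cont LK]) (use yx0 evN in \<open>auto elim: eventually_mono\<close>)
  have bnd: "(\<lambda>n. (2 * ln (real (L n) + 1) + 2) / N n) \<longlonglongrightarrow> 0"
  proof -
    have "(\<lambda>n. 2 * (ln (real (L n) + 1) / N n) + 2 * inverse (N n)) \<longlonglongrightarrow> 2 * 0 + 2 * 0"
      by (intro tendsto_intros lnL tendsto_inverse_0_at_top N)
    then show ?thesis by (simp add: divide_inverse algebra_simps)
  qed
  have E0: "(\<lambda>n. E n / N n) \<longlonglongrightarrow> 0"
  proof (rule tendsto_sandwich[OF _ _ tendsto_minus[OF bnd, simplified] bnd])
    show "\<forall>\<^sub>F n in sequentially. - ((2 * ln (real (L n) + 1) + 2) / N n) \<le> E n / N n"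
      using evN proof (rule eventually_mono)
      fix n assume "N n > 0"
      then show "- ((2 * ln (real (L n) + 1) + 2) / N n) \<le> E n / N n"
      proof -
        have "\<bar>E n\<bar> \<le> 2 * ln (real (L n) + 1) + 2"
          using ln_choose_bound[OF KL[of n]] unfolding E_def .
        then have "- (2 * ln (real (L n) + 1) + 2) \<le> E n" by linarith
        then have "- (2 * ln (real (L n) + 1) + 2) / N n \<le> E n / N n"
          using \<open>N n > 0\<close> by (intro divide_right_mono) auto
        then show ?thesis by (simp only: minus_divide_left)
      qed
    qed
    show "\<forall>\<^sub>F n in sequentially. E n / N n \<le> (2 * ln (real (L n) + 1) + 2) / N n"
      using evN proof (rule eventually_mono)
      fix n assume "N n > 0"
      then show "E n / N n \<le> (2 * ln (real (L n) + 1) + 2) / N n"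
      proof -
        have "\<bar>E n\<bar> \<le> 2 * ln (real (L n) + 1) + 2"
          using ln_choose_bound[OF KL[of n]] unfolding E_def .
        then have "E n \<le> (2 * ln (real (L n) + 1) + 2)" by linarith
        then show ?thesis
          using \<open>N n > 0\<close> by (intro divide_right_mono) auto
      qed
    qed
  qed
  have sum: "(\<lambda>n. xlogx (real (L n) / N n) - xlogx (real (K n) / N n) - xlogx (real (L n - K n) / N n) + E n / N n)
     \<longlonglongrightarrow> xlogx y - xlogx x - xlogx (y - x) + 0"
    by (intro tendsto_intros cL cK cLK E0)
  show ?thesis
  proof (rule Lim_transform_eventually[OF sum[simplified]])
    show "\<forall>\<^sub>F n in sequentially. xlogx (real (L n) / N n) - xlogx (real (K n) / N n) - xlogx (real (L n - K n) / N n) + E n / N n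
      = ln (real (L n choose K n)) / N n"
      using evN proof (rule eventually_mono)
      fix n assume Np: "N n > 0"
      have "N n * (xlogx (real (L n) / N n) - xlogx (real (K n) / N n) - xlogx (real (L n - K n) / N n))
          = real (L n) * ln (real (L n)) - real (K n) * ln (real (K n)) - real (L n - K n) * ln (real (L n - K n))
            - (real (L n) - real (K n) - real (L n - K n)) * ln (N n)"
        using xlogx_scale[OF Np, of "L n"] xlogx_scale[OF Np, of "K n"] xlogx_scale[OF Np, of "L n - K n"]
        by (simp only: right_diff_distrib left_diff_distrib)
      also have "real (L n) - real (K n) - real (L n - K n) = 0" using KL[of n] by simp
      finally show "xlogx (real (L n) / N n) - xlogx (real (K n) / N n) - xlogx (real (L n - K n) / N n) + E n / N n
      = ln (real (L n choose K n)) / N n"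
        using Np unfolding E_def by (simp add: field_simps del: of_nat_diff)
    qed
  qed
qed

lemma floor_lim:
  fixes N :: "nat \<Rightarrow> real"
  assumes c: "c \<ge> 0" and N: "filterlim N at_top sequentially"
  shows "(\<lambda>n. real (nat \<lfloor>c * N n\<rfloor>) / N n) \<longlonglongrightarrow> c"
proof -
  have evN: "eventually (\<lambda>n. N n > 0) sequentially"
    using N by (simp add: filterlim_at_top_dense)
  have i: "(\<lambda>n. c - inverse (N n)) \<longlonglongrightarrow> c - 0"
    by (intro tendsto_intros tendsto_inverse_0_at_top N)
  show ?thesis
  proof (rule tendsto_sandwich[OF _ _ i[simplified] tendsto_const])
    show "\<forall>\<^sub>F n in sequentially. c - inverse (N n) \<le> real (nat \<lfloor>c * N n\<rfloor>) / N n"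
      using evN proof (rule eventually_mono)
      fix n assume Np: "N n > 0"
      have "c * N n - 1 \<le> real (nat \<lfloor>c * N n\<rfloor>)" by linarith
      then have "(c * N n - 1) / N n \<le> real (nat \<lfloor>c * N n\<rfloor>) / N n"
        using Np by (intro divide_right_mono) auto
      then show "c - inverse (N n) \<le> real (nat \<lfloor>c * N n\<rfloor>) / N n"
        using Np by (simp add: field_simps)
    qed
    show "\<forall>\<^sub>F n in sequentially. real (nat \<lfloor>c * N n\<rfloor>) / N n \<le> c"
      using evN proof (rule eventually_mono)
      fix n assume Np: "N n > 0"
      have "0 \<le> c * N n" using c Np by simp
      then have "real (nat \<lfloor>c * N n\<rfloor>) \<le> c * N n" by linarith
      then show "real (nat \<lfloor>c * N n\<rfloor>) / N n \<le> c"
        using Np by (simp add: field_simps)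
    qed
  qed
qed

lemma plus1_lim:
  fixes N :: "nat \<Rightarrow> real"
  assumes N: "filterlim N at_top sequentially" and a: "(\<lambda>n. a n / N n) \<longlonglongrightarrow> c"
  shows "(\<lambda>n. (a n + 1) / N n) \<longlonglongrightarrow> c"
proof -
  have "(\<lambda>n. a n / N n + inverse (N n)) \<longlonglongrightarrow> c + 0"
    by (intro tendsto_intros tendsto_inverse_0_at_top N a)
  then show ?thesis by (simp add: divide_inverse distrib_right)
qed

lemma ln_lim:
  fixes N :: "nat \<Rightarrow> real"
  assumes N: "filterlim N at_top sequentially" and a0: "\<And>n. 0 \<le> a n"
    and c: "c \<ge> 0" "d \<ge> 0" and ab: "\<And>n. N n \<ge> 0 \<Longrightarrow> a n \<le> c * N n + d"
  shows "(\<lambda>n. ln (a n + 1) / N n) \<longlonglongrightarrow> 0"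
proof -
  have evN: "eventually (\<lambda>n. N n > 0) sequentially"
    using N by (simp add: filterlim_at_top_dense)
  have r: "((\<lambda>t::real. ln (t + 1) / t) \<longlongrightarrow> 0) at_top" by real_asymp
  have r2: "(\<lambda>n. ln (N n + 1) / N n) \<longlonglongrightarrow> 0"
    using filterlim_compose[OF r N] by (simp add: o_def)
  have u: "(\<lambda>n. ln (c + d + 1) * inverse (N n) + ln (N n + 1) / N n) \<longlonglongrightarrow> ln (c + d + 1) * 0 + 0"
    by (intro tendsto_intros tendsto_inverse_0_at_top N r2)
  show ?thesis
  proof (rule tendsto_sandwich[OF _ _ tendsto_const u[simplified]])
    show "\<forall>\<^sub>F n in sequentially. 0 \<le> ln (a n + 1) / N n"
      using evN by (rule eventually_mono) (use a0 in simp)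
    show "\<forall>\<^sub>F n in sequentially. ln (a n + 1) / N n \<le> ln (c + d + 1) * inverse (N n) + ln (N n + 1) / N n"
      using evN proof (rule eventually_mono)
      fix n assume Np: "N n > 0"
      have "a n + 1 \<le> (c + d + 1) * (N n + 1)"
        using ab[of n] Np c by (simp add: algebra_simps) (smt (verit) mult_nonneg_nonneg)
      then have "ln (a n + 1) \<le> ln ((c + d + 1) * (N n + 1))"
        using a0[of n] by (intro ln_mono) auto
      also have "\<dots> = ln (c + d + 1) + ln (N n + 1)"
        using c Np by (simp add: ln_mult)
      finally have "ln (a n + 1) / N n \<le> (ln (c + d + 1) + ln (N n + 1)) / N n"
        using Np by (intro divide_right_mono) auto
      then show "ln (a n + 1) / N n \<le> ln (c + d + 1) * inverse (N n) + ln (N n + 1) / N n"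
        by (simp add: divide_inverse distrib_right)
    qed
  qed
qed


lemma combine:
  fixes N :: "nat \<Rightarrow> real" and A B K L :: "nat \<Rightarrow> nat"
  assumes N: "filterlim N at_top sequentially"
    and main: "(\<lambda>n. ln (real (A n choose B n)) / N n) \<longlonglongrightarrow> H"
    and Ly: "(\<lambda>n. real (L n) / N n) \<longlonglongrightarrow> y"
    and Kx: "(\<lambda>n. real (K n) / N n) \<longlonglongrightarrow> x"
    and eq: "\<And>n. ln (P n) = ln (real (A n choose B n)) + real (K n) * \<alpha> + real (L n) * \<beta> + \<gamma> n"
    and M: "\<And>n. \<bar>\<gamma> n\<bar> \<le> M"
  shows "(\<lambda>n. ln (P n) / N n) \<longlonglongrightarrow> H + x * \<alpha> + y * \<beta>"
proof -
  have evN: "eventually (\<lambda>n. N n > 0) sequentially"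
    using N by (simp add: filterlim_at_top_dense)
  have i: "(\<lambda>n. M * inverse (N n)) \<longlonglongrightarrow> M * 0"
    by (intro tendsto_intros tendsto_inverse_0_at_top N)
  have g: "(\<lambda>n. \<gamma> n / N n) \<longlonglongrightarrow> 0"
  proof (rule tendsto_sandwich[OF _ _ tendsto_minus[OF i, simplified] i[simplified]])
    show "\<forall>\<^sub>F n in sequentially. - (M * inverse (N n)) \<le> \<gamma> n / N n"
      using evN proof (rule eventually_mono)
      fix n assume Np: "N n > 0"
      have "- M \<le> \<gamma> n" using M[of n] by linarith
      then have "- M / N n \<le> \<gamma> n / N n" using Np by (intro divide_right_mono) auto
      then show "- (M * inverse (N n)) \<le> \<gamma> n / N n" by (simp add: divide_inverse)
    qed
    show "\<forall>\<^sub>F n in sequentially. \<gamma> n / N n \<le> M * inverse (N n)"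
      using evN proof (rule eventually_mono)
      fix n assume Np: "N n > 0"
      have "\<gamma> n \<le> M" using M[of n] by linarith
      then have "\<gamma> n / N n \<le> M / N n" using Np by (intro divide_right_mono) auto
      then show "\<gamma> n / N n \<le> M * inverse (N n)" by (simp add: divide_inverse)
    qed
  qed
  have "(\<lambda>n. ln (real (A n choose B n)) / N n + real (K n) / N n * \<alpha> + real (L n) / N n * \<beta> + \<gamma> n / N n)
        \<longlonglongrightarrow> H + x * \<alpha> + y * \<beta> + 0"
    by (intro tendsto_intros main Ly Kx g)
  moreover have "ln (P n) / N n = ln (real (A n choose B n)) / N n + real (K n) / N n * \<alpha> + real (L n) / N n * \<beta> + \<gamma> n / N n" for n
    unfolding eq by (simp add: add_divide_distrib)
  ultimately show ?thesis by simp
qed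

theorem lemma6p1:
  fixes p q x y :: real
  assumes "0 < q" "q < p" "p < 1" "p + q = 1"
    and "0 \<le> x" "x \<le> y"
  shows "((\<lambda>n::nat. ln (pLK p q (nat \<lfloor>y * ln (real n)\<rfloor> + 1) (nat \<lfloor>x * ln (real n)\<rfloor>)) / ln (real n))
            \<longlonglongrightarrow> - gfun p q x y)
       \<and> ((\<lambda>n::nat. ln (pp1LK p q (nat \<lfloor>y * ln (real n)\<rfloor>) (nat \<lfloor>x * ln (real n)\<rfloor>)) / ln (real n))
            \<longlonglongrightarrow> - gfun p q x y)
       \<and> ((\<lambda>n::nat. ln (pm1LK p q (nat \<lfloor>y * ln (real n)\<rfloor> + 1) (nat \<lfloor>x * ln (real n)\<rfloor> + 1)) / ln (real n))
            \<longlonglongrightarrow> - gfun p q x y)"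
proof -
  define N where "N n = ln (real n)" for n :: nat
  define L where "L n = nat \<lfloor>y * N n\<rfloor>" for n
  define K where "K n = nat \<lfloor>x * N n\<rfloor>" for n
  have p0: "p > 0" and q0: "q > 0" and r0: "1 - 2 * q > 0" and p2: "2 * p > 0"
    using assms by auto
  have y0: "y \<ge> 0" using assms by simp
  have N0: "N n \<ge> 0" for n unfolding N_def by (cases "n = 0") auto
  have NT: "filterlim N at_top sequentially"
    unfolding N_def using filterlim_compose[OF ln_at_top filterlim_real_sequentially] by (simp add: o_def)
  have KL: "K n \<le> L n" for n
    unfolding K_def L_def using mult_right_mono[OF assms(6) N0[of n]]
    by (intro nat_mono floor_mono) auto
  have Ly: "(\<lambda>n. real (L n) / N n) \<longlonglongrightarrow> y" unfolding L_def by (rule floor_lim[OF y0 NT])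
  have Kx: "(\<lambda>n. real (K n) / N n) \<longlonglongrightarrow> x" unfolding K_def by (rule floor_lim[OF assms(5) NT])
  have Lle: "real (L n) \<le> y * N n + 0" for n
  proof -
    have "0 \<le> y * N n" using y0 N0[of n] by simp
    then show ?thesis unfolding L_def by linarith
  qed
  have lnL: "(\<lambda>n. ln (real (L n) + 1) / N n) \<longlonglongrightarrow> 0"
    by (rule ln_lim[OF NT _ y0 order_refl Lle]) simp
  have lnL1: "(\<lambda>n. ln (real (L n + 1) + 1) / N n) \<longlonglongrightarrow> 0"
    by (rule ln_lim[OF NT _ y0 zero_le_one[where 'a=real]]) (use Lle in auto)
  have m1: "(\<lambda>n. ln (real (L n choose K n)) / N n) \<longlonglongrightarrow> xlogx y - xlogx x - xlogx (y - x)"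
    by (rule main_choose[OF NT KL Ly Kx lnL])
  have m2: "(\<lambda>n. ln (real ((L n + 1) choose (K n + 1))) / N n) \<longlonglongrightarrow> xlogx y - xlogx x - xlogx (y - x)"
  proof (rule main_choose[OF NT])
    show "K n + 1 \<le> L n + 1" for n using KL[of n] by simp
    show "(\<lambda>n. real (L n + 1) / N n) \<longlonglongrightarrow> y" using plus1_lim[OF NT Ly] by (simp add: add.commute)
    show "(\<lambda>n. real (K n + 1) / N n) \<longlonglongrightarrow> x" using plus1_lim[OF NT Kx] by (simp add: add.commute)
    show "(\<lambda>n. ln (real (L n + 1) + 1) / N n) \<longlonglongrightarrow> 0" by (rule lnL1)
  qed
  have G: "- gfun p q x y = (xlogx y - xlogx x - xlogx (y - x)) + x * ln (2 * p) + y * ln q"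
    unfolding gfun_def by simp
  have C0: "real (a choose b) > 0" if "b \<le> a" for a b using that by simp
  have 1: "(\<lambda>n. ln (pLK p q (L n + 1) (K n)) / N n) \<longlonglongrightarrow> - gfun p q x y"
    unfolding G
  proof (rule combine[OF NT m1 Ly Kx, where M = "\<bar>ln p + ln (1 - 2*q)\<bar>" and \<gamma> = "\<lambda>_. ln p + ln (1 - 2*q)"])
    fix n
    show "ln (pLK p q (L n + 1) (K n)) = ln (real (L n choose K n)) + real (K n) * ln (2 * p) + real (L n) * ln q + (ln p + ln (1 - 2 * q))"
      unfolding pLK_def using C0[OF KL[of n]] p0 q0 r0 p2
      by (simp add: ln_mult ln_realpow distrib_left)
  qed simp
  have 2: "(\<lambda>n. ln (pp1LK p q (L n) (K n)) / N n) \<longlonglongrightarrow> - gfun p q x y"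
    unfolding G
  proof (rule combine[OF NT m1 Ly Kx, where M = "\<bar>ln (1 - 2*q)\<bar> + ln 2"
        and \<gamma> = "\<lambda>n. ln (1 - 2*q) + (if K n = 0 then 0 else - ln 2)"])
    fix n
    show "ln (pp1LK p q (L n) (K n)) = ln (real (L n choose K n)) + real (K n) * ln (2 * p) + real (L n) * ln q
       + (ln (1 - 2*q) + (if K n = 0 then 0 else - ln 2))"
    proof (cases "K n")
      case 0
      then show ?thesis unfolding pp1LK_def using q0 r0 by (simp add: ln_mult ln_realpow distrib_left)
    next
      case (Suc k)
      have "pp1LK p q (L n) (K n) = real (L n choose K n) * ((2*p)^k * p) * q ^ L n * (1 - 2*q)"
        unfolding pp1LK_def using Suc by simp
      also have "(2*p)^k * p = (2*p)^(K n) / 2" using Suc by simp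
      finally have e: "pp1LK p q (L n) (K n) = real (L n choose K n) * ((2*p)^(K n) / 2) * q ^ L n * (1 - 2*q)" .
      show ?thesis unfolding e using Suc C0[OF KL[of n]] p0 q0 r0 p2
        by (simp add: ln_mult ln_realpow ln_div distrib_left del: power_Suc)
    qed
    show "\<bar>ln (1 - 2*q) + (if K n = 0 then 0 else - ln 2)\<bar> \<le> \<bar>ln (1 - 2*q)\<bar> + ln 2"
    proof -
      have "\<bar>(if K n = 0 then 0 else - ln 2)\<bar> \<le> ln (2::real)" by simp
      then show ?thesis
        using abs_triangle_ineq[of "ln (1 - 2*q)" "(if K n = 0 then 0 else - ln 2)"] by linarith
    qed
  qed
  have 3: "(\<lambda>n. ln (pm1LK p q (L n + 1) (K n + 1)) / N n) \<longlonglongrightarrow> - gfun p q x y"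
    unfolding G
  proof (rule combine[OF NT m2 Ly Kx, where M = "\<bar>2 * ln p + ln (1 - 2*q)\<bar>" and \<gamma> = "\<lambda>_. 2 * ln p + ln (1 - 2*q)"])
    fix n
    have C: "real (L n + 1 choose (K n + 1)) > 0" using C0[of "K n + 1" "L n + 1"] KL[of n] by simp
    show "ln (pm1LK p q (L n + 1) (K n + 1)) = ln (real (L n + 1 choose (K n + 1))) + real (K n) * ln (2 * p) + real (L n) * ln q + (2 * ln p + ln (1 - 2 * q))"
      unfolding pm1LK_def using C p0 q0 r0 p2
      by (simp add: ln_mult ln_realpow distrib_left)
  qed simp
  show ?thesis using 1 2 3 unfolding L_def K_def N_def by simp
qed

end
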